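(* Let $k$ be a field, $H_4$ the Sweedler four-dimensional Hopf algebra, and $E_2\subset H_4$ the subalgebra generated by $h$ (the algebra of dual numbers), made an $H_4$-comodule algebra via the restriction of $\Delta$. Then $\mathcal{H}^0(H_4,E_2)=k^\times$ and $\mathcal{H}^1(H_4,E_2)$ has exactly two elements, the classes of $1\otimes 1$ and $1\otimes g$.
   Context: $H_4$ is the $k$-algebra generated by $g,h$ with $g^2=1$, $h^2=0$, $gh+hg=0$, with Hopf structure $\Delta(g)=g\otimes g$, $\Delta(h)=h\otimes g+1\otimes h$, $\varepsilon(g)=1$, $\varepsilon(h)=0$, $\sigma(g)=g$, $\sigma(gh)=gh$. Since $\Delta(E_2)\subseteq E_2\otimes H_4$, $E_2$ is an $H_4$-comodule algebra. General non-abelian Hopf cohomology of a Hopf algebra $H$ with coefficients in an $H$-comodule algebra $E$ (coaction $\Delta_E$ an algebra map): with $d^0(x)=\Delta_E(x)$, $d^1(x)=x\otimes1$ and $d^0(X)=(\Delta_E\otimes\mathrm{id})(X)$, $d^1(X)=(\mathrm{id}\otimes\Delta_H)(X)$, $d^2(X)=X\otimes1$: $\mathcal{H}^0(H,E)=\{x\in E^\times: d^0(x)=d^1(x)\}$; $\mathcal{Z}^1(H,E)=\{X\in(E\otimes H)^\times: d^2(X)d^0(X)=d^1(X)\}$; $E^\times$ acts on the right by $X\leftharpoonup x=d^1(x^{-1})Xd^0(x)$; $\mathcal{H}^1(H,E)$ is the orbit set. $D^\times$ denotes units of an algebra $D$. *)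

theory Defs
  imports Main
begin

text \<open>An element of an algebra with (finite) basis 'b over the field 'k is its
coefficient function 'b => 'k.  The multiplication is given by structure
constants c a b z = coefficient of basis vector z in the product a*b.\<close>

definition bv :: "'b \<Rightarrow> 'b \<Rightarrow> 'k::field" where
  "bv a = (\<lambda>z. if z = a then 1 else 0)"

definition mulc :: "('b \<Rightarrow> 'b \<Rightarrow> 'b \<Rightarrow> 'k::field) \<Rightarrow> ('b \<Rightarrow> 'k) \<Rightarrow> ('b \<Rightarrow> 'k) \<Rightarrow> ('b \<Rightarrow> 'k)" where
  "mulc c x y = (\<lambda>z. \<Sum>a\<in>UNIV. \<Sum>b\<in>UNIV. x a * y b * c a b z)"

definition tensc :: "('a \<Rightarrow> 'a \<Rightarrow> 'a \<Rightarrow> 'k::field) \<Rightarrow> ('b \<Rightarrow> 'b \<Rightarrow> 'b \<Rightarrow> 'k)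
    \<Rightarrow> ('a \<times> 'b) \<Rightarrow> ('a \<times> 'b) \<Rightarrow> ('a \<times> 'b) \<Rightarrow> 'k" where
  "tensc c1 c2 = (\<lambda>(a1,a2) (b1,b2) (z1,z2). c1 a1 b1 z1 * c2 a2 b2 z2)"

definition lin :: "('b \<Rightarrow> ('c \<Rightarrow> 'k::field)) \<Rightarrow> ('b \<Rightarrow> 'k) \<Rightarrow> ('c \<Rightarrow> 'k)" where
  "lin f x = (\<lambda>z. \<Sum>a\<in>UNIV. x a * f a z)"

definition is_unit_alg :: "('b \<Rightarrow> 'b \<Rightarrow> 'b \<Rightarrow> 'k::field) \<Rightarrow> ('b \<Rightarrow> 'k) \<Rightarrow> ('b \<Rightarrow> 'k) \<Rightarrow> bool" where
  "is_unit_alg c u x \<longleftrightarrow> (\<exists>y. mulc c x y = u \<and> mulc c y x = u)"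

text \<open>Basis of H4: 1, g, h, gh.\<close>
datatype hb = One | G | Hh | GH

lemma UNIV_hb: "(UNIV :: hb set) = {One, G, Hh, GH}"
  by (auto intro: hb.exhaust)

instance hb :: finite
  by standard (simp add: UNIV_hb)

text \<open>Basis of E2 (the subalgebra of H4 generated by h): 1, h.\<close>
datatype eb = E1 | EH

lemma UNIV_eb: "(UNIV :: eb set) = {E1, EH}"
  by (auto intro: eb.exhaust)

instance eb :: finite
  by standard (simp add: UNIV_eb)

text \<open>Products of basis vectors of H4, using g^2 = 1, h^2 = 0, gh + hg = 0.\<close>
fun hprod :: "hb \<Rightarrow> hb \<Rightarrow> (hb \<Rightarrow> 'k::field)" where
  "hprod One b = bv b"
| "hprod a One = bv a"
| "hprod G G = bv One"
| "hprod G Hh = bv GH"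
| "hprod G GH = bv Hh"
| "hprod Hh G = (\<lambda>z. - bv GH z)"
| "hprod Hh Hh = (\<lambda>z. 0)"
| "hprod Hh GH = (\<lambda>z. 0)"
| "hprod GH G = (\<lambda>z. - bv Hh z)"
| "hprod GH Hh = (\<lambda>z. 0)"
| "hprod GH GH = (\<lambda>z. 0)"

definition hc :: "hb \<Rightarrow> hb \<Rightarrow> hb \<Rightarrow> 'k::field" where
  "hc a b z = hprod a b z"

fun eprod :: "eb \<Rightarrow> eb \<Rightarrow> (eb \<Rightarrow> 'k::field)" where
  "eprod E1 b = bv b"
| "eprod EH E1 = bv EH"
| "eprod EH EH = (\<lambda>z. 0)"

definition ec :: "eb \<Rightarrow> eb \<Rightarrow> eb \<Rightarrow> 'k::field" where
  "ec a b z = eprod a b z"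

text \<open>Comultiplication of H4 on basis vectors:
  Delta(1) = 1\<otimes>1, Delta(g) = g\<otimes>g, Delta(h) = h\<otimes>g + 1\<otimes>h,
  Delta(gh) = Delta(g)Delta(h) = gh\<otimes>1 + g\<otimes>gh.\<close>
fun deltaH :: "hb \<Rightarrow> (hb \<times> hb \<Rightarrow> 'k::field)" where
  "deltaH One = bv (One, One)"
| "deltaH G = bv (G, G)"
| "deltaH Hh = (\<lambda>z. bv (Hh, G) z + bv (One, Hh) z)"
| "deltaH GH = (\<lambda>z. bv (GH, One) z + bv (G, GH) z)"

text \<open>Coaction of H4 on E2: restriction of Delta, landing in E2 \<otimes> H4.\<close>
fun deltaE :: "eb \<Rightarrow> (eb \<times> hb \<Rightarrow> 'k::field)" where
  "deltaE E1 = bv (E1, One)"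
| "deltaE EH = (\<lambda>z. bv (EH, G) z + bv (E1, Hh) z)"

abbreviation mulE :: "(eb \<Rightarrow> 'k::field) \<Rightarrow> (eb \<Rightarrow> 'k) \<Rightarrow> (eb \<Rightarrow> 'k)" where
  "mulE \<equiv> mulc ec"
abbreviation mulEH :: "(eb \<times> hb \<Rightarrow> 'k::field) \<Rightarrow> (eb \<times> hb \<Rightarrow> 'k) \<Rightarrow> (eb \<times> hb \<Rightarrow> 'k)" where
  "mulEH \<equiv> mulc (tensc ec hc)"
abbreviation mulEHH :: "(eb \<times> hb \<times> hb \<Rightarrow> 'k::field) \<Rightarrow> (eb \<times> hb \<times> hb \<Rightarrow> 'k) \<Rightarrow> (eb \<times> hb \<times> hb \<Rightarrow> 'k)" where
  "mulEHH \<equiv> mulc (tensc ec (tensc hc hc))"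

definition oneE :: "eb \<Rightarrow> 'k::field" where "oneE = bv E1"
definition oneEH :: "eb \<times> hb \<Rightarrow> 'k::field" where "oneEH = bv (E1, One)"

definition d0 :: "(eb \<Rightarrow> 'k::field) \<Rightarrow> (eb \<times> hb \<Rightarrow> 'k)" where
  "d0 x = lin deltaE x"
definition d1 :: "(eb \<Rightarrow> 'k::field) \<Rightarrow> (eb \<times> hb \<Rightarrow> 'k)" where
  "d1 x = (\<lambda>(e, h). x e * bv One h)"

text \<open>D^0 = Delta_E \<otimes> id, D^1 = id \<otimes> Delta_H, D^2(X) = X \<otimes> 1.\<close>
definition D0 :: "(eb \<times> hb \<Rightarrow> 'k::field) \<Rightarrow> (eb \<times> hb \<times> hb \<Rightarrow> 'k)" where
  "D0 X = lin (\<lambda>(a, b) (z1, z2, z3). deltaE a (z1, z2) * bv b z3) X"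
definition D1 :: "(eb \<times> hb \<Rightarrow> 'k::field) \<Rightarrow> (eb \<times> hb \<times> hb \<Rightarrow> 'k)" where
  "D1 X = lin (\<lambda>(a, b) (z1, z2, z3). bv a z1 * deltaH b (z2, z3)) X"
definition D2 :: "(eb \<times> hb \<Rightarrow> 'k::field) \<Rightarrow> (eb \<times> hb \<times> hb \<Rightarrow> 'k)" where
  "D2 X = (\<lambda>(z1, z2, z3). X (z1, z2) * bv One z3)"

definition unitsE :: "(eb \<Rightarrow> 'k::field) set" where
  "unitsE = {x. is_unit_alg ec oneE x}"
definition unitsEH :: "(eb \<times> hb \<Rightarrow> 'k::field) set" where
  "unitsEH = {X. is_unit_alg (tensc ec hc) oneEH X}"

definition H0 :: "(eb \<Rightarrow> 'k::field) set" where
  "H0 = {x \<in> unitsE. d0 x = d1 x}"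

definition Z1 :: "(eb \<times> hb \<Rightarrow> 'k::field) set" where
  "Z1 = {X \<in> unitsEH. mulEHH (D2 X) (D0 X) = D1 X}"

text \<open>Orbit of X under the right action X \<leftharpoonup> x = d^1(x^{-1}) X d^0(x), x \<in> E^\<times>.\<close>
definition orbit1 :: "(eb \<times> hb \<Rightarrow> 'k::field) \<Rightarrow> (eb \<times> hb \<Rightarrow> 'k) set" where
  "orbit1 X = {mulEH (mulEH (d1 y) X) (d0 x) | x y. mulE x y = oneE \<and> mulE y x = oneE}"

definition H1 :: "(eb \<times> hb \<Rightarrow> 'k::field) set set" where
  "H1 = orbit1 ` Z1"

end

theory Submission
  imports Defs
begin

lemma sum_eb: "(\<Sum>x\<in>(UNIV::eb set). f x) = f E1 + f EH"
  by (simp add: UNIV_eb)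
lemma sum_hb: "(\<Sum>x\<in>(UNIV::hb set). f x) = f One + f G + f Hh + f GH"
  by (simp add: UNIV_hb add.assoc)
lemma sum_prod: "(\<Sum>x\<in>(UNIV::('a::finite\<times>'b::finite) set). f x) = (\<Sum>a\<in>UNIV. \<Sum>b\<in>UNIV. f (a,b))"
  using sum.cartesian_product[of "\<lambda>a b. f(a,b)" UNIV UNIV] by simp

lemma bv_simps[simp]: "bv a a = 1" "a \<noteq> b \<Longrightarrow> bv a b = 0"
  by (auto simp: bv_def)

lemma bv_pair: "bv (a,b) (c,d) = (bv a c * bv b d :: 'k::field)"
  by (simp add: bv_def)

lemmas ev = bv_pair mulc_def sum_eb sum_hb sum_prod tensc_def hc_def ec_def D0_def D1_def D2_def
  d0_def d1_def lin_def oneE_def oneEH_def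

lemma ext_eb: "f E1 = g E1 \<Longrightarrow> f EH = g EH \<Longrightarrow> f = g"
  by (rule ext, case_tac x) auto
lemma ext_ebhb: "(\<And>h. f (E1,h) = g (E1,h)) \<Longrightarrow> (\<And>h. f (EH,h) = g (EH,h)) \<Longrightarrow> f = g"
  by (rule ext, case_tac x, case_tac a) auto
lemma all_hb: "(\<forall>h. P h) \<longleftrightarrow> P One \<and> P G \<and> P Hh \<and> P GH"
  by (metis hb.exhaust)
lemma all_eb: "(\<forall>h. P h) \<longleftrightarrow> P E1 \<and> P EH"
  by (metis eb.exhaust)
lemma ext3: "(\<And>e a b. f (e,a,b) = g (e,a,b)) \<Longrightarrow> f = g"
  by (rule ext, case_tac x) auto

definition F1 :: "'k::field \<Rightarrow> eb \<times> hb \<Rightarrow> 'k" where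
  "F1 t = (\<lambda>z. case z of (E1,One) \<Rightarrow> 1 | (E1,Hh) \<Rightarrow> t | (EH,One) \<Rightarrow> -t | (EH,G) \<Rightarrow> t
     | (EH,Hh) \<Rightarrow> -(t*t) | _ \<Rightarrow> 0)"
definition Fg :: "'k::field \<Rightarrow> eb \<times> hb \<Rightarrow> 'k" where
  "Fg t = (\<lambda>z. case z of (E1,G) \<Rightarrow> 1 | (E1,GH) \<Rightarrow> t | (EH,One) \<Rightarrow> t | (EH,G) \<Rightarrow> -t
     | (EH,GH) \<Rightarrow> -(t*t) | _ \<Rightarrow> 0)"

definition el :: "'k::field \<Rightarrow> 'k \<Rightarrow> eb \<Rightarrow> 'k" where
  "el a b = (\<lambda>e. case e of E1 \<Rightarrow> a | EH \<Rightarrow> b)"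

lemma inv_E:
  fixes x y :: "eb \<Rightarrow> 'k::field"
  assumes "mulE x y = oneE"
  shows "x E1 \<noteq> 0" "y E1 = inverse (x E1)" "y EH = - x EH / (x E1 * x E1)"
proof -
  have a: "x E1 * y E1 = 1" using fun_cong[OF assms, of E1] by (simp add: ev)
  have b: "x E1 * y EH + x EH * y E1 = 0" using fun_cong[OF assms, of EH] by (simp add: ev)
  show nz: "x E1 \<noteq> 0" using a by auto
  show y1: "y E1 = inverse (x E1)" using inverse_unique[OF a] by simp
  have "x E1 * y EH = - x EH * y E1" using b by (simp add: eq_neg_iff_add_eq_0)
  hence "y EH = - x EH * y E1 / x E1" using nz by (simp add: field_simps)
  thus "y EH = - x EH / (x E1 * x E1)" using y1 nz by (simp add: field_simps)
qed

lemma orbit_F1: "orbit1 (F1 t) = range (F1 :: 'k::field \<Rightarrow> _)"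
proof
  show "orbit1 (F1 t) \<subseteq> range F1"
  proof
    fix Z assume "Z \<in> orbit1 (F1 t)"
    then obtain x y :: "eb \<Rightarrow> 'k" where Z: "Z = mulEH (mulEH (d1 y) (F1 t)) (d0 x)"
      and xy: "mulE x y = oneE" by (auto simp: orbit1_def)
    note i = inv_E[OF xy]
    have "Z = F1 (t + x EH / x E1)"
      unfolding Z using i
      by (intro ext_ebhb; simp add: ev F1_def split: hb.split; simp add: field_simps)
    then show "Z \<in> range F1" by blast
  qed
next
  show "range F1 \<subseteq> orbit1 (F1 t)"
  proof
    fix Z assume "Z \<in> range (F1 :: 'k \<Rightarrow> _)"
    then obtain s where Z: "Z = F1 s" by auto
    have "F1 s = mulEH (mulEH (d1 (el 1 (t - s))) (F1 t)) (d0 (el 1 (s - t)))"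
      by (intro ext_ebhb; simp add: ev F1_def el_def split: hb.split; simp add: algebra_simps)
    moreover have "mulE (el 1 (s - t)) (el 1 (t - s)) = oneE" "mulE (el 1 (t - s)) (el 1 (s - t)) = oneE"
      by (intro ext_eb; simp add: ev el_def)+
    ultimately show "Z \<in> orbit1 (F1 t)" unfolding Z orbit1_def by blast
  qed
qed

lemma orbit_Fg: "orbit1 (Fg t) = range (Fg :: 'k::field \<Rightarrow> _)"
proof
  show "orbit1 (Fg t) \<subseteq> range Fg"
  proof
    fix Z assume "Z \<in> orbit1 (Fg t)"
    then obtain x y :: "eb \<Rightarrow> 'k" where Z: "Z = mulEH (mulEH (d1 y) (Fg t)) (d0 x)"
      and xy: "mulE x y = oneE" by (auto simp: orbit1_def)
    note i = inv_E[OF xy]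
    have "Z = Fg (t + x EH / x E1)"
      unfolding Z using i
      by (intro ext_ebhb; simp add: ev Fg_def split: hb.split; simp add: field_simps)
    then show "Z \<in> range Fg" by blast
  qed
next
  show "range Fg \<subseteq> orbit1 (Fg t)"
  proof
    fix Z assume "Z \<in> range (Fg :: 'k \<Rightarrow> _)"
    then obtain s where Z: "Z = Fg s" by auto
    have "Fg s = mulEH (mulEH (d1 (el 1 (t - s))) (Fg t)) (d0 (el 1 (s - t)))"
      by (intro ext_ebhb; simp add: ev Fg_def el_def split: hb.split; simp add: algebra_simps)
    moreover have "mulE (el 1 (s - t)) (el 1 (t - s)) = oneE" "mulE (el 1 (t - s)) (el 1 (s - t)) = oneE"
      by (intro ext_eb; simp add: ev el_def)+
    ultimately show "Z \<in> orbit1 (Fg t)" unfolding Z orbit1_def by blast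
  qed
qed

lemma Z1_class:
  fixes X :: "eb \<times> hb \<Rightarrow> 'k::field"
  assumes "X \<in> Z1"
  shows "X = F1 (X (E1,Hh)) \<or> X = Fg (X (E1,GH))"
proof -
  have c: "\<And>z. mulEHH (D2 X) (D0 X) z = D1 X z" using assms by (simp add: Z1_def)
  obtain Y where Y: "mulEH X Y = oneEH" using assms by (auto simp: Z1_def unitsEH_def is_unit_alg_def)
  have u: "X(E1,One) * Y(E1,One) + X(E1,G) * Y(E1,G) = 1"
    using fun_cong[OF Y, of "(E1,One)"] by (simp add: ev algebra_simps)
  have e1: "X(E1,One) = X(E1,One) * X(E1,One)" using c[of "(E1,One,One)"] by (simp add: ev algebra_simps)
  have e2: "X(E1,G) = X(E1,G) * X(E1,G)" using c[of "(E1,G,G)"] by (simp add: ev algebra_simps)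
  have e3: "0 = X(E1,One) * X(E1,G)" using c[of "(E1,One,G)"] by (simp add: ev algebra_simps)
  have e4: "X(E1,Hh) = X(E1,One) * X(E1,Hh)" using c[of "(E1,One,Hh)"] by (simp add: ev algebra_simps)
  have e5: "0 = X(E1,One) * X(E1,GH)" using c[of "(E1,One,GH)"] by (simp add: ev algebra_simps)
  have e6: "0 = X(E1,Hh) * X(E1,One) + X(E1,One) * X(EH,One)" using c[of "(E1,Hh,One)"] by (simp add: ev algebra_simps)
  have e7: "X(E1,Hh) = X(E1,Hh) * X(E1,G) + X(E1,One) * X(EH,G)" using c[of "(E1,Hh,G)"] by (simp add: ev algebra_simps)
  have e8: "0 = X(E1,Hh) * X(E1,Hh) + X(E1,One) * X(EH,Hh)" using c[of "(E1,Hh,Hh)"] by (simp add: ev algebra_simps)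
  have e9: "0 = X(E1,Hh) * X(E1,GH) + X(E1,One) * X(EH,GH)" using c[of "(E1,Hh,GH)"] by (simp add: ev algebra_simps)
  have e10: "X(E1,GH) = X(E1,GH) * X(E1,One) + X(E1,G) * X(EH,One)" using c[of "(E1,GH,One)"] by (simp add: ev algebra_simps)
  have e11: "0 = X(E1,GH) * X(E1,G) + X(E1,G) * X(EH,G)" using c[of "(E1,GH,G)"] by (simp add: ev algebra_simps)
  have e12: "0 = X(E1,GH) * X(E1,Hh) + X(E1,G) * X(EH,Hh)" using c[of "(E1,GH,Hh)"] by (simp add: ev algebra_simps)
  have e13: "0 = X(E1,GH) * X(E1,GH) + X(E1,G) * X(EH,GH)" using c[of "(E1,GH,GH)"] by (simp add: ev algebra_simps)
  have p1: "X(E1,One) = 0 \<or> X(E1,One) = 1" using e1 by (metis mult_cancel_right1 mult_zero_left)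
  show ?thesis
  proof (cases "X(E1,One) = 1")
    case True
    have "X(E1,G) = 0" using e3 True by simp
    moreover have "X(E1,GH) = 0" using e5 True by simp
    ultimately show ?thesis using True e6 e7 e8 e9
      by (intro disjI1 ext_ebhb; simp add: F1_def split: hb.split; simp add: algebra_simps eq_neg_iff_add_eq_0)
  next
    case False
    hence 0: "X(E1,One) = 0" using p1 by simp
    have 1: "X(E1,G) = 1" using e2 u 0 by (metis mult_cancel_right1 mult_zero_left add_0)
    have "X(E1,Hh) = 0" using e4 0 by simp
    then show ?thesis using 0 1 e10 e11 e12 e13
      by (intro disjI2 ext_ebhb; simp add: Fg_def split: hb.split; simp add: algebra_simps eq_neg_iff_add_eq_0)
  qed
qed

lemma bv_F1: "bv (E1,One) = (F1 0 :: _ \<Rightarrow> 'k::field)"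
  by (intro ext_ebhb; simp add: F1_def split: hb.split)
lemma bv_Fg: "bv (E1,G) = (Fg 0 :: _ \<Rightarrow> 'k::field)"
  by (intro ext_ebhb; simp add: Fg_def split: hb.split)

lemma Z1_one: "(bv (E1,One) :: _ \<Rightarrow> 'k::field) \<in> Z1"
proof -
  have "mulEH (bv (E1,One)) (bv (E1,One)) = (oneEH :: _ \<Rightarrow> 'k)"
    by (intro ext_ebhb; simp add: ev split: hb.split)
  moreover have "mulEHH (D2 (bv (E1,One))) (D0 (bv (E1,One))) = (D1 (bv (E1,One)) :: _ \<Rightarrow> 'k)"
    by (rule ext3, case_tac e; case_tac a; case_tac b; simp add: ev)
  ultimately show ?thesis unfolding Z1_def unitsEH_def is_unit_alg_def by blast
qed

lemma Z1_g: "(bv (E1,G) :: _ \<Rightarrow> 'k::field) \<in> Z1"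
proof -
  have "mulEH (bv (E1,G)) (bv (E1,G)) = (oneEH :: _ \<Rightarrow> 'k)"
    by (intro ext_ebhb; simp add: ev split: hb.split)
  moreover have "mulEHH (D2 (bv (E1,G))) (D0 (bv (E1,G))) = (D1 (bv (E1,G)) :: _ \<Rightarrow> 'k)"
    by (rule ext3, case_tac e; case_tac a; case_tac b; simp add: ev)
  ultimately show ?thesis unfolding Z1_def unitsEH_def is_unit_alg_def by blast
qed

lemma H0_eq: "(H0 :: (eb \<Rightarrow> 'k::field) set) = {(\<lambda>e. c * oneE e) | c. c \<noteq> 0}"
proof
  show "(H0 :: (eb \<Rightarrow> 'k) set) \<subseteq> {(\<lambda>e. c * oneE e) | c. c \<noteq> 0}"
  proof
    fix x :: "eb \<Rightarrow> 'k" assume x: "x \<in> H0"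
    then obtain y where "mulE x y = oneE" by (auto simp: H0_def unitsE_def is_unit_alg_def)
    hence nz: "x E1 \<noteq> 0" by (rule inv_E)
    have "d0 x (E1,Hh) = d1 x (E1,Hh)" using x by (simp add: H0_def)
    hence "x EH = 0" by (simp add: ev)
    hence "x = (\<lambda>e. x E1 * oneE e)" by (intro ext_eb; simp add: oneE_def)
    thus "x \<in> {(\<lambda>e. c * oneE e) | c. c \<noteq> 0}" using nz by blast
  qed
next
  show "{(\<lambda>e. c * oneE e) | c. c \<noteq> 0} \<subseteq> (H0 :: (eb \<Rightarrow> 'k) set)"
  proof
    fix x :: "eb \<Rightarrow> 'k" assume "x \<in> {(\<lambda>e. c * oneE e) | c. c \<noteq> 0}"
    then obtain c :: 'k where c: "c \<noteq> 0" and x: "x = (\<lambda>e. c * oneE e)" by blast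
    have "mulE x (\<lambda>e. inverse c * oneE e) = oneE" "mulE (\<lambda>e. inverse c * oneE e) x = oneE"
      unfolding x using c by (intro ext_eb; simp add: ev)+
    hence "x \<in> unitsE" unfolding unitsE_def is_unit_alg_def by blast
    moreover have "d0 x = d1 x" unfolding x by (intro ext_ebhb; simp add: ev split: hb.split)
    ultimately show "x \<in> H0" by (simp add: H0_def)
  qed
qed

theorem proposition1p6:
  shows "(H0 :: (eb \<Rightarrow> 'k::field) set) = {(\<lambda>e. c * oneE e) | c. c \<noteq> 0}
    \<and> (H1 :: (eb \<times> hb \<Rightarrow> 'k::field) set set) = {orbit1 (bv (E1, One)), orbit1 (bv (E1, G))}
    \<and> orbit1 (bv (E1, One)) \<noteq> (orbit1 (bv (E1, G)) :: (eb \<times> hb \<Rightarrow> 'k) set)"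
proof (intro conjI)
  show "(H0 :: (eb \<Rightarrow> 'k::field) set) = {(\<lambda>e. c * oneE e) | c. c \<noteq> 0}" by (rule H0_eq)
  have o1: "orbit1 (bv (E1, One)) = range (F1 :: 'k \<Rightarrow> _)" by (simp add: bv_F1 orbit_F1)
  have og: "orbit1 (bv (E1, G)) = range (Fg :: 'k \<Rightarrow> _)" by (simp add: bv_Fg orbit_Fg)
  show "(H1 :: (eb \<times> hb \<Rightarrow> 'k::field) set set) = {orbit1 (bv (E1, One)), orbit1 (bv (E1, G))}"
  proof
    show "(H1 :: (eb \<times> hb \<Rightarrow> 'k) set set) \<subseteq> {orbit1 (bv (E1, One)), orbit1 (bv (E1, G))}"
    proof
      fix Ob assume "Ob \<in> (H1 :: (eb \<times> hb \<Rightarrow> 'k) set set)"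
      then obtain X where X: "X \<in> Z1" and Ob: "Ob = orbit1 X" by (auto simp: H1_def)
      from Z1_class[OF X] show "Ob \<in> {orbit1 (bv (E1, One)), orbit1 (bv (E1, G))}"
      proof
        assume "X = F1 (X (E1,Hh))"
        hence "Ob = range F1" using Ob orbit_F1 by metis
        thus ?thesis using o1 by simp
      next
        assume "X = Fg (X (E1,GH))"
        hence "Ob = range Fg" using Ob orbit_Fg by metis
        thus ?thesis using og by simp
      qed
    qed
  next
    show "{orbit1 (bv (E1, One)), orbit1 (bv (E1, G))} \<subseteq> (H1 :: (eb \<times> hb \<Rightarrow> 'k) set set)"
      using Z1_one Z1_g unfolding H1_def by blast
  qed
  have "Fg 0 \<notin> range (F1 :: 'k \<Rightarrow> _)"
  proof
    assume "Fg 0 \<in> range (F1 :: 'k \<Rightarrow> _)"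
    then obtain s :: 'k where "Fg 0 = F1 s" by auto
    hence "Fg 0 (E1,One) = (F1 s (E1,One) :: 'k)" by simp
    thus False by (simp add: F1_def Fg_def)
  qed
  thus "orbit1 (bv (E1, One)) \<noteq> (orbit1 (bv (E1, G)) :: (eb \<times> hb \<Rightarrow> 'k) set)"
    unfolding o1 og by blast
qed

end
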